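(* Let $\mathcal N$ be a one-layer ReLU CNN with input dimension $n_0^{(1)}\times n_0^{(2)}\times d_0$, $d_1$ filters of dimension $f_1^{(1)}\times f_1^{(2)}\times d_0$ and stride $s_1$, where $n_0^{(1)},n_0^{(2)},d_0,f_1^{(1)},f_1^{(2)},s_1$ are fixed. Then as $d_1\to\infty$, the maximal number of linear regions satisfies $R_{\mathcal N}=\Theta\big(d_1^{\#\bigcup_{(i,j)\in I_{\mathcal N}}S_{i,j}}\big)$. In particular, if $\bigcup_{(i,j)\in I_{\mathcal N}}S_{i,j}=\{(a,b,c):1\le a\le n_0^{(1)},1\le b\le n_0^{(2)},1\le c\le d_0\}$, then $R_{\mathcal N}=\Theta\big(d_1^{\,n_0^{(1)}n_0^{(2)}d_0}\big)$.
   Context: One-layer ReLU CNN: input $X^0\in\mathbb R^{n_0^{(1)}\times n_0^{(2)}\times d_0}$; filters $W^{1,k}\in\mathbb R^{f_1^{(1)}\times f_1^{(2)}\times d_0}$, biases $B^{1,k}$, $1\le k\le d_1$, stride $s_1$; $n_1^{(r)}=\lfloor (n_0^{(r)}-f_1^{(r)})/s_1\rfloor+1$; pre-activations $Z^1_{i,j,k}=\sum_{a,b,c}W^{1,k}_{a,b,c}X^0_{a+(i-1)s_1,b+(j-1)s_1,c}+B^{1,k}$. An activation pattern assigns $\pm1$ to each neuron $(i,j,k)$; its region is the set of inputs where each pre-activation times its sign is positive. $R_{\mathcal N}$ is the maximum over all parameter values of the number of activation patterns with nonempty region. $I_{\mathcal N}=\{(i,j):1\le i\le n_1^{(1)},1\le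 j\le n_1^{(2)}\}$ and $S_{i,j}=\{(a+(i-1)s_1,b+(j-1)s_1,c):1\le a\le f_1^{(1)},1\le b\le f_1^{(2)},1\le c\le d_0\}$. $f=\Theta(g)$ means $c_1g\le f\le c_2 g$ for some constants $c_1,c_2>0$ and all sufficiently large arguments. *)

theory Defs
  imports Complex_Main "HOL-Library.Landau_Symbols"
begin

text \<open>Indices are 1-based as in the paper.
  Input: X :: nat \<Rightarrow> nat \<Rightarrow> nat \<Rightarrow> real (only entries with
  1 \<le> a \<le> n01, 1 \<le> b \<le> n02, 1 \<le> c \<le> d0 matter).
  Filters: W k a b c = W^{1,k}_{a,b,c}; biases B k = B^{1,k}.\<close>

definition outdim :: "nat \<Rightarrow> nat \<Rightarrow> nat \<Rightarrow> nat" where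
  "outdim n f s = (n - f) div s + 1"

definition preact ::
  "nat \<Rightarrow> nat \<Rightarrow> nat \<Rightarrow> nat \<Rightarrow> (nat \<Rightarrow> nat \<Rightarrow> nat \<Rightarrow> nat \<Rightarrow> real) \<Rightarrow> (nat \<Rightarrow> real)
   \<Rightarrow> (nat \<Rightarrow> nat \<Rightarrow> nat \<Rightarrow> real) \<Rightarrow> nat \<Rightarrow> nat \<Rightarrow> nat \<Rightarrow> real" where
  "preact d0 f1 f2 s W B X i j k =
     (\<Sum>a\<in>{1..f1}. \<Sum>b\<in>{1..f2}. \<Sum>c\<in>{1..d0}.
        W k a b c * X (a + (i - 1) * s) (b + (j - 1) * s) c) + B k"

definition neurons :: "nat \<Rightarrow> nat \<Rightarrow> nat \<Rightarrow> nat \<Rightarrow> nat \<Rightarrow> nat \<Rightarrow> (nat \<times> nat \<times> nat) set" where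
  "neurons n01 n02 f1 f2 s d1 =
     {1..outdim n01 f1 s} \<times> {1..outdim n02 f2 s} \<times> {1..d1}"

text \<open>Activation patterns: sign \<plusminus>1 on each neuron, 0 elsewhere (for extensionality).\<close>
definition patterns :: "(nat \<times> nat \<times> nat) set \<Rightarrow> (nat \<times> nat \<times> nat \<Rightarrow> int) set" where
  "patterns N = {p. (\<forall>x\<in>N. p x \<in> {-1, 1}) \<and> (\<forall>x. x \<notin> N \<longrightarrow> p x = 0)}"

definition region ::
  "nat \<Rightarrow> nat \<Rightarrow> nat \<Rightarrow> nat \<Rightarrow> nat \<Rightarrow> nat \<Rightarrow> nat
   \<Rightarrow> (nat \<Rightarrow> nat \<Rightarrow> nat \<Rightarrow> nat \<Rightarrow> real) \<Rightarrow> (nat \<Rightarrow> real)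
   \<Rightarrow> (nat \<times> nat \<times> nat \<Rightarrow> int) \<Rightarrow> (nat \<Rightarrow> nat \<Rightarrow> nat \<Rightarrow> real) set" where
  "region n01 n02 d0 f1 f2 s d1 W B (p :: nat \<times> nat \<times> nat \<Rightarrow> int) =
     {X. \<forall>(i, j, k)\<in>neurons n01 n02 f1 f2 s d1.
          real_of_int (p (i, j, k)) * preact d0 f1 f2 s W B X i j k > 0}"

definition num_regions ::
  "nat \<Rightarrow> nat \<Rightarrow> nat \<Rightarrow> nat \<Rightarrow> nat \<Rightarrow> nat \<Rightarrow> nat
   \<Rightarrow> (nat \<Rightarrow> nat \<Rightarrow> nat \<Rightarrow> nat \<Rightarrow> real) \<Rightarrow> (nat \<Rightarrow> real) \<Rightarrow> nat" where
  "num_regions n01 n02 d0 f1 f2 s d1 W B =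
     card {p \<in> patterns (neurons n01 n02 f1 f2 s d1).
             region n01 n02 d0 f1 f2 s d1 W B p \<noteq> {}}"

text \<open>R_N: maximum over all parameter values (the set of values is finite, bounded by 2^#neurons).\<close>
definition max_regions :: "nat \<Rightarrow> nat \<Rightarrow> nat \<Rightarrow> nat \<Rightarrow> nat \<Rightarrow> nat \<Rightarrow> nat \<Rightarrow> nat" where
  "max_regions n01 n02 d0 f1 f2 s d1 =
     Max {num_regions n01 n02 d0 f1 f2 s d1 W B | W B. True}"

definition patch :: "nat \<Rightarrow> nat \<Rightarrow> nat \<Rightarrow> nat \<Rightarrow> nat \<Rightarrow> nat \<Rightarrow> (nat \<times> nat \<times> nat) set" where
  "patch d0 f1 f2 s i j =
     {(a + (i - 1) * s, b + (j - 1) * s, c) | a b c.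
        1 \<le> a \<and> a \<le> f1 \<and> 1 \<le> b \<and> b \<le> f2 \<and> 1 \<le> c \<and> c \<le> d0}"

definition covered :: "nat \<Rightarrow> nat \<Rightarrow> nat \<Rightarrow> nat \<Rightarrow> nat \<Rightarrow> nat \<Rightarrow> (nat \<times> nat \<times> nat) set" where
  "covered n01 n02 d0 f1 f2 s =
     (\<Union>(i, j)\<in>{1..outdim n01 f1 s} \<times> {1..outdim n02 f2 s}. patch d0 f1 f2 s i j)"

end

theory Submission imports Defs "HOL-Library.FuncSet" begin

definition aff :: "('a \<Rightarrow> real) \<Rightarrow> real \<Rightarrow> 'a set \<Rightarrow> ('a \<Rightarrow> real) \<Rightarrow> real" where
  "aff a b V x = (\<Sum>i\<in>V. a i * x i) + b"

definition pats :: "'n set \<Rightarrow> ('n \<Rightarrow> int) set" where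
  "pats N = {p. (\<forall>x\<in>N. p x \<in> {-1, 1}) \<and> (\<forall>x. x \<notin> N \<longrightarrow> p x = 0)}"

definition realized :: "'a set \<Rightarrow> 'n set \<Rightarrow> ('n \<Rightarrow> 'a \<Rightarrow> real) \<Rightarrow> ('n \<Rightarrow> real) \<Rightarrow> ('n \<Rightarrow> int) set" where
  "realized V N A B = {p \<in> pats N. \<exists>x. \<forall>h\<in>N. real_of_int (p h) * aff (A h) (B h) V x > 0}"

lemma finite_pats: assumes "finite N" shows "finite (pats N)"
proof -
  have "pats N = {f. \<forall>x. (x \<in> N \<longrightarrow> f x \<in> {-1,1}) \<and> (x \<notin> N \<longrightarrow> f x = 0)}"
    unfolding pats_def by blast
  then show ?thesis using finite_set_of_finite_funs[OF assms, of "{-1::int,1}" 0] by simp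
qed

lemma finite_realized: "finite N \<Longrightarrow> finite (realized V N A B)"
  by (rule finite_subset[of _ "pats N"]) (auto simp: realized_def finite_pats)

lemma aff_comb:
  "aff a b V (\<lambda>i. (1 - t) * x1 i + t * x2 i) = (1 - t) * aff a b V x1 + t * aff a b V x2"
proof -
  have "(\<Sum>i\<in>V. a i * ((1 - t) * x1 i + t * x2 i)) = (\<Sum>i\<in>V. (1 - t) * (a i * x1 i) + t * (a i * x2 i))"
    by (rule sum.cong) (auto simp: algebra_simps)
  also have "\<dots> = (1 - t) * (\<Sum>i\<in>V. a i * x1 i) + t * (\<Sum>i\<in>V. a i * x2 i)"
    by (simp only: sum.distrib flip: sum_distrib_left)
  finally show ?thesis unfolding aff_def by (simp add: algebra_simps)
qed

lemma pow_step: "(n+1::nat)^m + (n+1)^(m-1) \<le> (n+2)^m" if "m \<ge> 1"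
proof -
  define k where "k = m - 1"
  have m: "m = Suc k" using that by (simp add: k_def)
  have "(n+1)^k \<le> (n+2)^k" by (intro power_mono) auto
  then have "(n+2) * (n+1)^k \<le> (n+2) * (n+2)^k" by (rule mult_le_mono2)
  moreover have "(n+2) * (n+1)^k = (n+1)^Suc k + (n+1)^k" by simp
  ultimately show ?thesis unfolding m by simp
qed

lemma ub:
  assumes "finite N"
  shows "finite V \<Longrightarrow> card (realized V N A B) \<le> (card N + 1) ^ card V"
  using assms
proof (induction N arbitrary: V A B rule: finite_induct)
  case empty
  have "realized V {} A B \<subseteq> {\<lambda>_. 0}" unfolding realized_def pats_def by auto
  then have "realized V {} A B = {} \<or> realized V {} A B = {\<lambda>_. 0}" by (rule subset_singletonD)
  then have "card (realized V {} A B) \<le> 1" by auto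
  then show ?case by simp
next
  case (insert g N)
  define S where "S = realized V N A B"
  define S' where "S' = realized V (insert g N) A B"
  define T where "T = {q\<in>S. q(g:=1) \<in> S' \<and> q(g:=-1) \<in> S'}"
  define \<phi> where "\<phi> q = (if q(g:=1) \<in> S' then q(g:=1) else q(g:=-1))" for q :: "_ \<Rightarrow> int"
  have fS: "finite S" unfolding S_def using finite_realized insert by blast
  have fT: "finite T" unfolding T_def using fS by auto
  have sub: "S' \<subseteq> \<phi> ` S \<union> (\<lambda>q. q(g:=-1)) ` T"
  proof
    fix p assume pS': "p \<in> S'"
    define q where "q = p(g:=0)"
    have pp: "p \<in> pats (insert g N)" and ex: "\<exists>x. \<forall>h\<in>insert g N. real_of_int (p h) * aff (A h) (B h) V x > 0"
      using pS' unfolding S'_def realized_def by auto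
    have qS: "q \<in> S" unfolding S_def realized_def
    proof safe
      show "q \<in> pats N" using pp insert(2) unfolding pats_def q_def by auto
      from ex obtain x where x: "\<forall>h\<in>insert g N. real_of_int (p h) * aff (A h) (B h) V x > 0" by blast
      have "\<forall>h\<in>N. real_of_int (q h) * aff (A h) (B h) V x > 0"
      proof
        fix h assume h: "h \<in> N"
        then have "h \<noteq> g" using insert(2) by blast
        then show "real_of_int (q h) * aff (A h) (B h) V x > 0" using x h unfolding q_def by simp
      qed
      then show "\<exists>x. \<forall>h\<in>N. real_of_int (q h) * aff (A h) (B h) V x > 0" by blast
    qed
    have "p g = 1 \<or> p g = -1" using pp unfolding pats_def by auto
    then show "p \<in> \<phi> ` S \<union> (\<lambda>q. q(g:=-1)) ` T"
    proof
      assume "p g = 1"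
      then have "p = q(g:=1)" unfolding q_def by auto
      then have "\<phi> q = p" using pS' unfolding \<phi>_def by auto
      then show ?thesis using qS by blast
    next
      assume "p g = -1"
      then have pq: "p = q(g:=-1)" unfolding q_def by auto
      show ?thesis
      proof (cases "q(g:=1) \<in> S'")
        case True
        then have "q \<in> T" unfolding T_def using qS pS' pq by auto
        then show ?thesis using pq by blast
      next
        case False
        then have "\<phi> q = p" using pq unfolding \<phi>_def by auto
        then show ?thesis using qS by blast
      qed
    qed
  qed
  have cS': "card S' \<le> card S + card T"
  proof -
    have "card S' \<le> card (\<phi> ` S \<union> (\<lambda>q. q(g:=-1)) ` T)"
      using sub fS fT by (intro card_mono) auto
    also have "\<dots> \<le> card (\<phi> ` S) + card ((\<lambda>q. q(g:=-1)) ` T)" by (rule card_Un_le)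
    also have "\<dots> \<le> card S + card T" by (intro add_mono card_image_le fS fT)
    finally show ?thesis .
  qed
  have cS: "card S \<le> (card N + 1) ^ card V" unfolding S_def using insert by blast
  have both: "\<exists>x1 x2. aff (A g) (B g) V x1 > 0 \<and> aff (A g) (B g) V x2 < 0 \<and>
       (\<forall>h\<in>N. real_of_int (q h) * aff (A h) (B h) V x1 > 0) \<and>
       (\<forall>h\<in>N. real_of_int (q h) * aff (A h) (B h) V x2 > 0)" if qT: "q \<in> T" for q
  proof -
    from qT obtain x1 where x1: "\<forall>h\<in>insert g N. real_of_int ((q(g:=1)) h) * aff (A h) (B h) V x1 > 0"
      unfolding T_def S'_def realized_def by auto
    from qT obtain x2 where x2: "\<forall>h\<in>insert g N. real_of_int ((q(g:=-1)) h) * aff (A h) (B h) V x2 > 0"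
      unfolding T_def S'_def realized_def by auto
    have a1: "aff (A g) (B g) V x1 > 0" using x1 by simp
    have a2: "aff (A g) (B g) V x2 < 0" using x2 by simp
    have b1: "\<forall>h\<in>N. real_of_int (q h) * aff (A h) (B h) V x1 > 0"
    proof
      fix h assume h: "h \<in> N"
      then have "h \<noteq> g" using insert(2) by blast
      then show "real_of_int (q h) * aff (A h) (B h) V x1 > 0" using x1 h \<open>h \<noteq> g\<close> by force
    qed
    have b2: "\<forall>h\<in>N. real_of_int (q h) * aff (A h) (B h) V x2 > 0"
    proof
      fix h assume h: "h \<in> N"
      then have "h \<noteq> g" using insert(2) by blast
      then show "real_of_int (q h) * aff (A h) (B h) V x2 > 0" using x2 h \<open>h \<noteq> g\<close> by force
    qed
    show ?thesis using a1 a2 b1 b2 by blast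
  qed
  have card_eq: "card (insert g N) = card N + 1" using insert by simp
  show ?case
  proof (cases "\<forall>j\<in>V. A g j = 0")
    case True
    have "T = {}"
    proof (rule ccontr)
      assume "T \<noteq> {}" then obtain q where "q \<in> T" by blast
      from both[OF this] obtain x1 x2 where "aff (A g) (B g) V x1 > 0" "aff (A g) (B g) V x2 < 0" by blast
      then show False using True unfolding aff_def by simp
    qed
    then have "card S' \<le> (card N + 1) ^ card V" using cS' cS by simp
    also have "\<dots> \<le> (card (insert g N) + 1) ^ card V" using card_eq by (intro power_mono) auto
    finally show ?thesis unfolding S'_def .
  next
    case False
    then obtain j where jV: "j \<in> V" and aj: "A g j \<noteq> 0" by blast
    define V' where "V' = V - {j}"
    define A' where "A' h i = A h i - A h j * A g i / A g j" for h i
    define B' where "B' h = B h - A h j * B g / A g j" for h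
    have key: "aff (A' h) (B' h) V' y = aff (A h) (B h) V y" if y0: "aff (A g) (B g) V y = 0" for h y
    proof -
      define Sg where "Sg = (\<Sum>i\<in>V'. A g i * y i)"
      define Sh where "Sh = (\<Sum>i\<in>V'. A h i * y i)"
      have fV: "finite V" using insert by blast
      have eg: "(\<Sum>i\<in>V. A g i * y i) = A g j * y j + Sg" unfolding Sg_def V'_def
        using sum.remove[OF fV jV] by simp
      have eh: "(\<Sum>i\<in>V. A h i * y i) = A h j * y j + Sh" unfolding Sh_def V'_def
        using sum.remove[OF fV jV] by simp
      have e': "(\<Sum>i\<in>V'. A' h i * y i) = Sh - A h j / A g j * Sg"
        unfolding Sh_def Sg_def A'_def by (simp add: algebra_simps sum_subtractf sum_distrib_left)
      have yj: "A g j * y j + Sg + B g = 0" using y0 eg unfolding aff_def by simp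
      have Sg_eq: "Sg = - (B g + A g j * y j)" using yj by simp
      have "aff (A' h) (B' h) V' y = Sh - A h j / A g j * Sg + B h - A h j * B g / A g j"
        unfolding aff_def e' B'_def by simp
      also have "\<dots> = Sh + A h j * y j + B h" unfolding Sg_eq using aj by (simp add: field_simps)
      also have "\<dots> = aff (A h) (B h) V y" unfolding aff_def eh by simp
      finally show ?thesis .
    qed
    have TR: "T \<subseteq> realized V' N A' B'"
    proof
      fix q assume qT: "q \<in> T"
      then have qp: "q \<in> pats N" unfolding T_def S_def realized_def by auto
      from both[OF qT] obtain x1 x2 where
        p1: "aff (A g) (B g) V x1 > 0" and n2: "aff (A g) (B g) V x2 < 0" and
        h1: "\<forall>h\<in>N. real_of_int (q h) * aff (A h) (B h) V x1 > 0" and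
        h2: "\<forall>h\<in>N. real_of_int (q h) * aff (A h) (B h) V x2 > 0" by blast
      define F1 where "F1 = aff (A g) (B g) V x1"
      define F2 where "F2 = aff (A g) (B g) V x2"
      define t where "t = F1 / (F1 - F2)"
      have t0: "0 < t" and t1: "t < 1" using p1 n2 unfolding t_def F1_def F2_def by (auto simp: field_simps)
      define y where "y = (\<lambda>i. (1 - t) * x1 i + t * x2 i)"
      have y0: "aff (A g) (B g) V y = 0" unfolding y_def aff_comb
        using p1 n2 unfolding t_def F1_def[symmetric] F2_def[symmetric] by (simp add: field_simps)
      have "\<forall>h\<in>N. real_of_int (q h) * aff (A' h) (B' h) V' y > 0"
      proof
        fix h assume hN: "h \<in> N"
        have "real_of_int (q h) * aff (A h) (B h) V y =
           (1 - t) * (real_of_int (q h) * aff (A h) (B h) V x1) + t * (real_of_int (q h) * aff (A h) (B h) V x2)"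
          unfolding y_def aff_comb by (simp add: algebra_simps)
        also have "\<dots> > 0"
        proof -
          have u1: "0 < real_of_int (q h) * aff (A h) (B h) V x1" using h1 hN by blast
          have u2: "0 < real_of_int (q h) * aff (A h) (B h) V x2" using h2 hN by blast
          have "0 < 1 - t" using t1 by simp
          show ?thesis by (rule add_pos_pos[OF mult_pos_pos[OF \<open>0 < 1 - t\<close> u1] mult_pos_pos[OF t0 u2]])
        qed
        finally show "real_of_int (q h) * aff (A' h) (B' h) V' y > 0" using key[OF y0] by simp
      qed
      then show "q \<in> realized V' N A' B'" unfolding realized_def using qp by blast
    qed
    have "card T \<le> card (realized V' N A' B')"
      using TR insert by (intro card_mono finite_realized) auto
    also have "\<dots> \<le> (card N + 1) ^ card V'" using insert unfolding V'_def by auto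
    also have "card V' = card V - 1" unfolding V'_def using jV insert by simp
    finally have cT: "card T \<le> (card N + 1) ^ (card V - 1)" .
    have "card V > 0" using jV insert.prems by (auto simp: card_gt_0_iff)
    then have "card V \<ge> 1" by simp
    then have "(card N + 1) ^ card V + (card N + 1) ^ (card V - 1) \<le> (card N + 2) ^ card V"
      by (rule pow_step)
    then have "card S' \<le> (card (insert g N) + 1) ^ card V" using cS' cS cT card_eq by simp
    then show ?thesis unfolding S'_def .
  qed
qed


lemma patch_eq: "patch d0 f1 f2 s i j =
   (\<lambda>(a,b,c). (a + (i - 1) * s, b + (j - 1) * s, c)) ` ({1..f1} \<times> {1..f2} \<times> {1..d0})"
  unfolding patch_def by (auto simp: image_iff)

lemma finite_covered: "finite (covered n01 n02 d0 f1 f2 s)"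
  unfolding covered_def patch_eq by (intro finite_UN_I) auto

lemma preact_sum: "preact d0 f1 f2 s W B X i j k =
  (\<Sum>(a,b,c)\<in>{1..f1} \<times> {1..f2} \<times> {1..d0}. W k a b c * X (a + (i - 1) * s) (b + (j - 1) * s) c) + B k"
  unfolding preact_def by (simp add: sum.cartesian_product)

definition Acoef :: "nat \<Rightarrow> nat \<Rightarrow> nat \<Rightarrow> nat \<Rightarrow> (nat \<Rightarrow> nat \<Rightarrow> nat \<Rightarrow> nat \<Rightarrow> real)
   \<Rightarrow> nat \<times> nat \<times> nat \<Rightarrow> nat \<times> nat \<times> nat \<Rightarrow> real" where
  "Acoef d0 f1 f2 s W h v = (case h of (i,j,k) \<Rightarrow> case v of (v1,v2,v3) \<Rightarrow>
     if (v1,v2,v3) \<in> patch d0 f1 f2 s i j then W k (v1 - (i - 1) * s) (v2 - (j - 1) * s) v3 else 0)"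

definition xX :: "(nat \<Rightarrow> nat \<Rightarrow> nat \<Rightarrow> real) \<Rightarrow> nat \<times> nat \<times> nat \<Rightarrow> real" where
  "xX X v = (case v of (a,b,c) \<Rightarrow> X a b c)"

lemma preact_aff:
  assumes "i \<in> {1..outdim n01 f1 s}" "j \<in> {1..outdim n02 f2 s}"
  shows "preact d0 f1 f2 s W B X i j k =
     aff (Acoef d0 f1 f2 s W (i,j,k)) (B k) (covered n01 n02 d0 f1 f2 s) (xX X)"
proof -
  define \<tau> where "\<tau> = (\<lambda>(a,b,c). (a + (i - 1) * s, b + (j - 1) * s, c::nat))"
  define box where "box = {1..f1} \<times> {1..f2} \<times> {1..d0}"
  have pe: "patch d0 f1 f2 s i j = \<tau> ` box" unfolding \<tau>_def box_def by (rule patch_eq)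
  have sub: "patch d0 f1 f2 s i j \<subseteq> covered n01 n02 d0 f1 f2 s"
    unfolding covered_def using assms by blast
  have "(\<Sum>v\<in>covered n01 n02 d0 f1 f2 s. Acoef d0 f1 f2 s W (i,j,k) v * xX X v)
      = (\<Sum>v\<in>patch d0 f1 f2 s i j. Acoef d0 f1 f2 s W (i,j,k) v * xX X v)"
    by (rule sum.mono_neutral_right[OF finite_covered sub]) (auto simp: Acoef_def)
  also have "\<dots> = (\<Sum>v\<in>box. Acoef d0 f1 f2 s W (i,j,k) (\<tau> v) * xX X (\<tau> v))"
    unfolding pe by (rule sum.reindex_cong[where l=\<tau>]) (auto simp: inj_on_def \<tau>_def)
  also have "\<dots> = (\<Sum>(a,b,c)\<in>box. W k a b c * X (a + (i - 1) * s) (b + (j - 1) * s) c)"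
  proof (rule sum.cong)
    fix v assume "v \<in> box"
    then have "\<tau> v \<in> patch d0 f1 f2 s i j" unfolding pe by blast
    then show "Acoef d0 f1 f2 s W (i,j,k) (\<tau> v) * xX X (\<tau> v) =
        (case v of (a,b,c) \<Rightarrow> W k a b c * X (a + (i - 1) * s) (b + (j - 1) * s) c)"
      unfolding Acoef_def xX_def \<tau>_def by (cases v) auto
  qed simp
  finally show ?thesis unfolding aff_def preact_sum box_def by simp
qed

lemma card_neurons: "card (neurons n01 n02 f1 f2 s d1) = outdim n01 f1 s * outdim n02 f2 s * d1"
  unfolding neurons_def by (simp add: card_cartesian_product)

lemma patterns_pats: "patterns N = pats N"
  unfolding patterns_def pats_def by simp

lemma finite_neurons: "finite (neurons n01 n02 f1 f2 s d1)"
  unfolding neurons_def by auto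

lemma upper:
  "num_regions n01 n02 d0 f1 f2 s d1 W B \<le>
     (outdim n01 f1 s * outdim n02 f2 s * d1 + 1) ^ card (covered n01 n02 d0 f1 f2 s)"
proof -
  define N where "N = neurons n01 n02 f1 f2 s d1"
  define U where "U = covered n01 n02 d0 f1 f2 s"
  define An where "An = Acoef d0 f1 f2 s W"
  define Bn where "Bn = (\<lambda>h::nat\<times>nat\<times>nat. B (snd (snd h)))"
  have sub: "{p \<in> patterns N. region n01 n02 d0 f1 f2 s d1 W B p \<noteq> {}} \<subseteq> realized U N An Bn"
  proof
    fix p assume "p \<in> {p \<in> patterns N. region n01 n02 d0 f1 f2 s d1 W B p \<noteq> {}}"
    then have pp: "p \<in> patterns N" and r: "region n01 n02 d0 f1 f2 s d1 W B p \<noteq> {}" by auto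
    then obtain X where X: "X \<in> region n01 n02 d0 f1 f2 s d1 W B p" by blast
    have "\<forall>h\<in>N. real_of_int (p h) * aff (An h) (Bn h) U (xX X) > 0"
    proof
      fix h assume hN: "h \<in> N"
      obtain i j k where h: "h = (i,j,k)" using prod_cases3 by blast
      have ij: "i \<in> {1..outdim n01 f1 s}" "j \<in> {1..outdim n02 f2 s}" using hN h unfolding N_def neurons_def by auto
      have "real_of_int (p (i,j,k)) * preact d0 f1 f2 s W B X i j k > 0"
        using X hN h unfolding region_def N_def by auto
      then show "real_of_int (p h) * aff (An h) (Bn h) U (xX X) > 0"
        using preact_aff[OF ij] h unfolding An_def Bn_def U_def by simp
    qed
    then show "p \<in> realized U N An Bn" using pp unfolding realized_def patterns_pats by blast
  qed
  have "num_regions n01 n02 d0 f1 f2 s d1 W B \<le> card (realized U N An Bn)"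
    unfolding num_regions_def N_def[symmetric]
    by (intro card_mono finite_realized) (auto simp: N_def finite_neurons sub[unfolded N_def])
  also have "\<dots> \<le> (card N + 1) ^ card U"
    by (intro ub) (auto simp: N_def U_def finite_neurons finite_covered)
  finally show ?thesis unfolding N_def U_def card_neurons .
qed



lemma half_ne: "real n1 + 1/2 + - (real n2 + 1) \<noteq> (0::real)"
proof
  assume "real n1 + 1/2 + - (real n2 + 1) = 0"
  then have "real (2*n1+1) = real (2*n2+2)" by simp
  then have "2*n1+1 = 2*n2+2" by (simp only: of_nat_eq_iff)
  then show False by presburger
qed

lemma lower:
  assumes m1: "1 \<le> card (covered n01 n02 d0 f1 f2 s)"
  shows "\<exists>W B. (d1 div card (covered n01 n02 d0 f1 f2 s) + 1) ^ card (covered n01 n02 d0 f1 f2 s)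
            \<le> num_regions n01 n02 d0 f1 f2 s d1 W B"
proof -
  define U where "U = covered n01 n02 d0 f1 f2 s"
  define m where "m = card U"
  define G where "G = d1 div m"
  define o1 where "o1 = outdim n01 f1 s"
  define o2 where "o2 = outdim n02 f2 s"
  define N where "N = neurons n01 n02 f1 f2 s d1"
  have m0: "m \<ge> 1" using m1 unfolding m_def U_def .
  have fU: "finite U" unfolding U_def by (rule finite_covered)
  obtain e where e: "bij_betw e {0..<m} U" using ex_bij_betw_nat_finite[OF fU] unfolding m_def by blast
  define P where "P u z \<longleftrightarrow> (case z of (i,j,a,b,c) \<Rightarrow> i \<in> {1..o1} \<and> j \<in> {1..o2} \<and> a \<in> {1..f1} \<and>
      b \<in> {1..f2} \<and> c \<in> {1..d0} \<and> u = (a + (i - 1) * s, b + (j - 1) * s, c))" for u and z :: "nat \<times> nat \<times> nat \<times> nat \<times> nat"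
  have Pex: "\<exists>z. P u z" if "u \<in> U" for u
    using that unfolding U_def covered_def patch_def P_def o1_def o2_def by fastforce
  define off where "off u = (SOME z. P u z)" for u
  have Poff: "P u (off u)" if "u \<in> U" for u
    unfolding off_def using Pex[OF that] by (rule someI_ex)
  define uk where "uk k = e ((k - 1) mod m)" for k
  have ukU: "uk k \<in> U" for k
    unfolding uk_def using m0 by (intro bij_betw_apply[OF e]) auto
  define W0 where "W0 k a b c = (case off (uk k) of (i',j',a',b',c') \<Rightarrow>
       if (a,b,c) = (a',b',c') then 1 else (0::real))" for k a b c
  define B0 where "B0 k = - (real ((k - 1) div m) + 1)" for k
  have pre: "preact d0 f1 f2 s W0 B0 X i j k =
      X (a' + (i - 1) * s) (b' + (j - 1) * s) c' + B0 k"
    if o: "off (uk k) = (i',j',a',b',c')" for X i j k i' j' a' b' c'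
  proof -
    have inbox: "(a',b',c') \<in> {1..f1} \<times> {1..f2} \<times> {1..d0}" using Poff[OF ukU[of k]] o unfolding P_def by auto
    have "(\<Sum>(a,b,c)\<in>{1..f1} \<times> {1..f2} \<times> {1..d0}. W0 k a b c * X (a + (i - 1) * s) (b + (j - 1) * s) c)
        = (\<Sum>v\<in>{1..f1} \<times> {1..f2} \<times> {1..d0}. if v = (a',b',c') then
              (\<lambda>(a,b,c). X (a + (i - 1) * s) (b + (j - 1) * s) c) v else 0)"
      by (rule sum.cong) (auto simp: W0_def o split: if_splits)
    also have "\<dots> = X (a' + (i - 1) * s) (b' + (j - 1) * s) c'"
      using inbox by (simp add: sum.delta)
    finally show ?thesis unfolding preact_sum by simp
  qed
  define Xp where "Xp \<psi> a b c = real (\<psi> (a,b,c)) + 1/2" for \<psi> :: "nat \<times> nat \<times> nat \<Rightarrow> nat" and a b c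
  have nz: "preact d0 f1 f2 s W0 B0 (Xp \<psi>) i j k \<noteq> 0" for \<psi> i j k
  proof -
    obtain i' j' a' b' c' where o: "off (uk k) = (i',j',a',b',c')" using prod_cases5 by blast
    show ?thesis unfolding pre[OF o] Xp_def B0_def by (rule half_ne)
  qed
  define pp where "pp \<psi> = (\<lambda>(i,j,k). if (i,j,k) \<in> N then
       (if preact d0 f1 f2 s W0 B0 (Xp \<psi>) i j k > 0 then 1 else -1) else (0::int))" for \<psi>
  define R where "R = {p \<in> patterns N. region n01 n02 d0 f1 f2 s d1 W0 B0 p \<noteq> {}}"
  have ppR: "pp \<psi> \<in> R" for \<psi>
  proof -
    have "pp \<psi> \<in> patterns N" unfolding patterns_def pp_def by auto
    moreover have "Xp \<psi> \<in> region n01 n02 d0 f1 f2 s d1 W0 B0 (pp \<psi>)"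
      unfolding region_def N_def[symmetric]
    proof (safe)
      fix i j k assume "(i,j,k) \<in> N"
      then show "0 < real_of_int (pp \<psi> (i, j, k)) * preact d0 f1 f2 s W0 B0 (Xp \<psi>) i j k"
        using nz[of \<psi> i j k] unfolding pp_def by auto
    qed
    ultimately show ?thesis unfolding R_def by blast
  qed
  have diff: "pp \<psi> \<noteq> pp \<psi>'" if u: "u \<in> U" and lt: "\<psi> u < \<psi>' u" and le: "\<psi>' u \<le> G" for \<psi> \<psi>' u
  proof -
    obtain q where q: "q < m" "e q = u" using e u unfolding bij_betw_def by auto
    define k where "k = \<psi> u * m + q + 1"
    have km: "(k - 1) mod m = q" "(k - 1) div m = \<psi> u" unfolding k_def using q by auto
    have uk: "uk k = u" unfolding uk_def km q by simp
    obtain i' j' a' b' c' where o: "off u = (i',j',a',b',c')" using prod_cases5 by blast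
    have Pu: "P u (i',j',a',b',c')" using Poff[OF u] o by simp
    have "\<psi> u + 1 \<le> G" using lt le by simp
    then have "(\<psi> u + 1) * m \<le> G * m" by (rule mult_le_mono1)
    also have "G * m \<le> d1" unfolding G_def by simp
    finally have "k \<le> d1" unfolding k_def using q by (simp add: algebra_simps)
    then have kN: "(i',j',k) \<in> N" using Pu unfolding N_def neurons_def P_def o1_def o2_def k_def by auto
    have uu: "(a' + (i' - 1) * s, b' + (j' - 1) * s, c') = u" using Pu unfolding P_def by simp
    have o': "off (uk k) = (i',j',a',b',c')" using o uk by simp
    have v1: "preact d0 f1 f2 s W0 B0 (Xp \<psi>) i' j' k = real (\<psi> u) + 1/2 - (real (\<psi> u) + 1)"
      unfolding pre[OF o'] Xp_def B0_def uu km by simp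
    have v2: "preact d0 f1 f2 s W0 B0 (Xp \<psi>') i' j' k = real (\<psi>' u) + 1/2 - (real (\<psi> u) + 1)"
      unfolding pre[OF o'] Xp_def B0_def uu km by simp
    have "real (\<psi> u) + 1 \<le> real (\<psi>' u)" using lt by simp
    then have "pp \<psi> (i',j',k) = -1" "pp \<psi>' (i',j',k) = 1"
      unfolding pp_def using kN v1 v2 by auto
    then show ?thesis by auto
  qed
  have inj: "inj_on pp (PiE U (\<lambda>_. {0..G}))"
  proof (rule inj_onI, rule ccontr)
    fix \<psi> \<psi>' assume a: "\<psi> \<in> PiE U (\<lambda>_. {0..G})" "\<psi>' \<in> PiE U (\<lambda>_. {0..G})" "pp \<psi> = pp \<psi>'" "\<psi> \<noteq> \<psi>'"
    have "\<exists>u\<in>U. \<psi> u \<noteq> \<psi>' u"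
    proof (rule ccontr)
      assume "\<not> (\<exists>u\<in>U. \<psi> u \<noteq> \<psi>' u)"
      then have "\<psi> = \<psi>'" using PiE_ext[OF a(1) a(2)] by blast
      then show False using a(4) by blast
    qed
    then obtain u where u: "u \<in> U" "\<psi> u \<noteq> \<psi>' u" by blast
    have g1: "\<psi> u \<le> G" and g2: "\<psi>' u \<le> G" using a u by auto
    show False
    proof (cases "\<psi> u < \<psi>' u")
      case True
      then show False using diff[of u \<psi> \<psi>'] u(1) True g2 a(3) by blast
    next
      case False
      then have lt': "\<psi>' u < \<psi> u" using u(2) by simp
      show False using diff[of u \<psi>' \<psi>] u(1) lt' g1 a(3) by simp
    qed
  qed
  have fR: "finite R" unfolding R_def patterns_pats N_def
    using finite_pats[OF finite_neurons] by auto
  have "(G + 1) ^ m = card (PiE U (\<lambda>_. {0..G}))"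
    using fU by (simp add: card_PiE m_def)
  also have "\<dots> = card (pp ` PiE U (\<lambda>_. {0..G}))" using inj by (simp add: card_image)
  also have "\<dots> \<le> card R" using ppR fR by (intro card_mono) auto
  finally show ?thesis unfolding R_def num_regions_def N_def G_def m_def U_def by blast
qed


lemma covered_ne: assumes "1 \<le> d0" "1 \<le> f1" "1 \<le> f2"
  shows "1 \<le> card (covered n01 n02 d0 f1 f2 s)"
proof -
  have "(1,1,1) \<in> patch d0 f1 f2 s 1 1" unfolding patch_def using assms by force
  moreover have "(1::nat,1::nat) \<in> {1..outdim n01 f1 s} \<times> {1..outdim n02 f2 s}" by (simp add: outdim_def)
  ultimately have "(1,1,1) \<in> covered n01 n02 d0 f1 f2 s" unfolding covered_def by blast
  then have "card (covered n01 n02 d0 f1 f2 s) > 0" using finite_covered by (auto simp: card_gt_0_iff)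
  then show ?thesis by simp
qed

theorem theorem3:
  fixes n01 n02 d0 f1 f2 s :: nat
  assumes "1 \<le> s" and "1 \<le> d0"
    and "1 \<le> f1" and "f1 \<le> n01" and "1 \<le> f2" and "f2 \<le> n02"
  shows "(\<lambda>d1. real (max_regions n01 n02 d0 f1 f2 s d1))
           \<in> \<Theta>(\<lambda>d1. real d1 ^ card (covered n01 n02 d0 f1 f2 s))
       \<and> (covered n01 n02 d0 f1 f2 s = {1..n01} \<times> {1..n02} \<times> {1..d0} \<longrightarrow>
         (\<lambda>d1. real (max_regions n01 n02 d0 f1 f2 s d1))
           \<in> \<Theta>(\<lambda>d1. real d1 ^ (n01 * n02 * d0)))"
proof -
  define m where "m = card (covered n01 n02 d0 f1 f2 s)"
  define c where "c = outdim n01 f1 s * outdim n02 f2 s"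
  have m1: "1 \<le> m" unfolding m_def using covered_ne assms by blast
  have bounds: "real (d1 div m + 1) ^ m \<le> real (max_regions n01 n02 d0 f1 f2 s d1) \<and>
      real (max_regions n01 n02 d0 f1 f2 s d1) \<le> real (c * d1 + 1) ^ m" for d1
  proof -
    define M where "M = {num_regions n01 n02 d0 f1 f2 s d1 W B | W B. True}"
    have Mb: "\<forall>x\<in>M. x \<le> (c * d1 + 1) ^ m" unfolding M_def c_def m_def using upper by blast
    have fM: "finite M" by (rule finite_subset[of _ "{..(c * d1 + 1) ^ m}"]) (use Mb in auto)
    have neM: "M \<noteq> {}" unfolding M_def by blast
    have up: "Max M \<le> (c * d1 + 1) ^ m" using fM neM Mb by (simp add: Max_le_iff)
    obtain W B where WB: "(d1 div m + 1) ^ m \<le> num_regions n01 n02 d0 f1 f2 s d1 W B"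
      using lower[OF m1[unfolded m_def]] unfolding m_def by blast
    have "num_regions n01 n02 d0 f1 f2 s d1 W B \<in> M" unfolding M_def by blast
    then have lo: "(d1 div m + 1) ^ m \<le> Max M" using Max_ge[OF fM] WB by (meson le_trans)
    have "real ((d1 div m + 1) ^ m) \<le> real (Max M)" using lo by (simp only: of_nat_le_iff)
    moreover have "real (Max M) \<le> real ((c * d1 + 1) ^ m)" using up by (simp only: of_nat_le_iff)
    ultimately show ?thesis unfolding max_regions_def M_def[symmetric] by simp
  qed
  have th: "(\<lambda>d1. real (max_regions n01 n02 d0 f1 f2 s d1)) \<in> \<Theta>(\<lambda>d1. real d1 ^ m)"
  proof (rule bigthetaI'[of "(1 / real m) ^ m" "real (c + 1) ^ m"])
    show "0 < (1 / real m) ^ m" using m1 by simp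
    show "0 < real (c + 1) ^ m" by simp
    show "eventually (\<lambda>x. (1 / real m) ^ m * norm (real x ^ m) \<le> norm (real (max_regions n01 n02 d0 f1 f2 s x))
         \<and> norm (real (max_regions n01 n02 d0 f1 f2 s x)) \<le> real (c + 1) ^ m * norm (real x ^ m)) at_top"
      unfolding eventually_at_top_linorder
    proof (intro exI[of _ 1] allI impI)
      fix d1 :: nat assume d1: "d1 \<ge> 1"
      have lowb: "(1 / real m) ^ m * real d1 ^ m \<le> real (d1 div m + 1) ^ m"
      proof -
        have e1: "(d1 div m + 1) * m = d1 div m * m + m" by (simp add: algebra_simps)
        have "d1 mod m < m" using m1 by simp
        then have "d1 \<le> (d1 div m + 1) * m" using div_mult_mod_eq[of d1 m] e1 by linarith
        then have "real d1 \<le> real ((d1 div m + 1) * m)" by (simp only: of_nat_le_iff)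
        then have "real d1 \<le> real (d1 div m + 1) * real m" by (simp add: algebra_simps)
        then have "real d1 / real m \<le> real (d1 div m + 1)" using m1 by (simp add: divide_le_eq)
        then have "(real d1 / real m) ^ m \<le> real (d1 div m + 1) ^ m" by (intro power_mono) auto
        then show ?thesis by (simp add: power_divide)
      qed
      have upb: "real (c * d1 + 1) ^ m \<le> real (c + 1) ^ m * real d1 ^ m"
      proof -
        have "c * d1 + 1 \<le> (c + 1) * d1" using d1 by simp
        then have "real (c * d1 + 1) \<le> real ((c + 1) * d1)" by (simp only: of_nat_le_iff)
        then have "real (c * d1 + 1) \<le> real (c + 1) * real d1" by (simp add: algebra_simps)
        then have "real (c * d1 + 1) ^ m \<le> (real (c + 1) * real d1) ^ m" by (intro power_mono) auto
        then show ?thesis by (simp add: power_mult_distrib)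
      qed
      show "(1 / real m) ^ m * norm (real d1 ^ m) \<le> norm (real (max_regions n01 n02 d0 f1 f2 s d1))
         \<and> norm (real (max_regions n01 n02 d0 f1 f2 s d1)) \<le> real (c + 1) ^ m * norm (real d1 ^ m)"
        using bounds[of d1] lowb upb by simp
    qed
  qed
  have "card ({1..n01} \<times> {1..n02} \<times> {1..d0}) = n01 * n02 * d0" by (simp add: card_cartesian_product)
  then have cb: "card ({1..n01} \<times> {1..n02} \<times> {1..d0}) = n01 * n02 * d0" .
  show ?thesis
  proof (intro conjI impI)
    show "(\<lambda>d1. real (max_regions n01 n02 d0 f1 f2 s d1))
           \<in> \<Theta>(\<lambda>d1. real d1 ^ card (covered n01 n02 d0 f1 f2 s))" using th unfolding m_def .
    assume eq: "covered n01 n02 d0 f1 f2 s = {1..n01} \<times> {1..n02} \<times> {1..d0}"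
    have mm: "m = n01 * n02 * d0" unfolding m_def eq cb ..
    show "(\<lambda>d1. real (max_regions n01 n02 d0 f1 f2 s d1))
           \<in> \<Theta>(\<lambda>d1. real d1 ^ (n01 * n02 * d0))" using th unfolding mm .
  qed
qed

end
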